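(* Let $i$ and $j$ be two components whose posterior intervals are nested, in the sense that $$0\le p_{\omega|y_i=1}\le p_{\omega|y_j=1}\le p_{\omega|y_j=0}\le p_{\omega|y_i=0}\le 1,$$ i.e. $I_i=[p_{\omega|y_i=1},p_{\omega|y_i=0}]\supseteq I_j=[p_{\omega|y_j=1},p_{\omega|y_j=0}]$. Then for every concave function $l^*:[0,1]\to\mathbb{R}$, $$L^{G}_\omega(i)\le L^{G}_\omega(j)\quad\text{and}\quad \mathrm{VoI}_G(i)\ge \mathrm{VoI}_G(j).$$
   Context: A system consists of $N$ binary components $c_1,\dots,c_N$ with random joint state $s=(s_1,\dots,s_N)\in\{0,1\}^N$ ($s_k=1$ means $c_k$ works, $s_k=0$ means it has failed), distributed according to an arbitrary prior distribution $p_s$. A structure function $\phi:\{0,1\}^N\to\{0,1\}$ gives the system state $u=\phi(s)$ ($u=0$ means system failure). The prior system failure probability is $p_\pi=\mathbb{P}[u=0]$. Inspecting component $c_k$ yields a binary observation $y_k$ ($y_k=0$ is an "alarm", $y_k=1$ a "silence"), jointly distributed with $s$. Let $h_k=\mathbb{P}[y_k=0]$, assumed to satisfy $0<h_k<1$ so that the posterior system failure probabilities $p_{\omega|y_k=b}=\mathbb{P}[u=0\mid y_k=b]$, $b\in\{0,1\}$, are defined. Global metric: given a concave function $l^*:[0,1]\to\mathbb{R}$ (e.g. $l^*(p)=\min_{A}\,[p\,l_{A,0}+(1-p)\,l_{A,1}]$ over a finite set of actions $A$ with expected losses $l_{A,0},l_{A,1}$ when the system is failed/working), define the prior loss $L^G_\pi=l^*(p_\pi)$,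 the expected posterior loss of inspecting $c_k$ $$L^G_\omega(k)=h_k\,l^*(p_{\omega|y_k=0})+(1-h_k)\,l^*(p_{\omega|y_k=1}),$$ and the value of information $\mathrm{VoI}_G(k)=L^G_\pi-L^G_\omega(k)$. *)

theory Defs
  imports "HOL-Probability.Probability"
begin

(* Components are indexed by a finite type 'c (so N = CARD('c)).
   s :: 'w => 'c => bool    joint component state (True = works, i.e. s_k = 1)
   phi :: ('c => bool) => bool   structure function (True = system works, u = 1)
   y :: 'c => 'w => bool    observations (False = alarm y_k = 0, True = silence y_k = 1) *)

definition prior_fail :: "'w pmf \<Rightarrow> ('w \<Rightarrow> 'c \<Rightarrow> bool) \<Rightarrow> (('c \<Rightarrow> bool) \<Rightarrow> bool) \<Rightarrow> real" where
  "prior_fail P s phi = measure_pmf.prob P {w. \<not> phi (s w)}"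

definition alarm_prob :: "'w pmf \<Rightarrow> ('c \<Rightarrow> 'w \<Rightarrow> bool) \<Rightarrow> 'c \<Rightarrow> real" where
  "alarm_prob P y k = measure_pmf.prob P {w. \<not> y k w}"

definition post_fail :: "'w pmf \<Rightarrow> ('w \<Rightarrow> 'c \<Rightarrow> bool) \<Rightarrow> (('c \<Rightarrow> bool) \<Rightarrow> bool)
    \<Rightarrow> ('c \<Rightarrow> 'w \<Rightarrow> bool) \<Rightarrow> 'c \<Rightarrow> bool \<Rightarrow> real" where
  "post_fail P s phi y k b =
     measure_pmf.prob P {w. \<not> phi (s w) \<and> y k w = b} / measure_pmf.prob P {w. y k w = b}"

definition LG_prior :: "(real \<Rightarrow> real) \<Rightarrow> 'w pmf \<Rightarrow> ('w \<Rightarrow> 'c \<Rightarrow> bool) \<Rightarrow> (('c \<Rightarrow> bool) \<Rightarrow> bool) \<Rightarrow> real" where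
  "LG_prior l P s phi = l (prior_fail P s phi)"

definition LG_post :: "(real \<Rightarrow> real) \<Rightarrow> 'w pmf \<Rightarrow> ('w \<Rightarrow> 'c \<Rightarrow> bool) \<Rightarrow> (('c \<Rightarrow> bool) \<Rightarrow> bool)
    \<Rightarrow> ('c \<Rightarrow> 'w \<Rightarrow> bool) \<Rightarrow> 'c \<Rightarrow> real" where
  "LG_post l P s phi y k =
     alarm_prob P y k * l (post_fail P s phi y k False)
     + (1 - alarm_prob P y k) * l (post_fail P s phi y k True)"

definition VoI_G :: "(real \<Rightarrow> real) \<Rightarrow> 'w pmf \<Rightarrow> ('w \<Rightarrow> 'c \<Rightarrow> bool) \<Rightarrow> (('c \<Rightarrow> bool) \<Rightarrow> bool)
    \<Rightarrow> ('c \<Rightarrow> 'w \<Rightarrow> bool) \<Rightarrow> 'c \<Rightarrow> real" where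
  "VoI_G l P s phi y k = LG_prior l P s phi - LG_post l P s phi y k"

end

theory Submission
  imports Defs
begin

lemma chord:
  fixes l :: "real \<Rightarrow> real"
  assumes conc: "concave_on {0..1} l" and "0 \<le> a" "a < d" "d \<le> 1" "a \<le> x" "x \<le> d"
  shows "(d - a) * l x \<ge> (d - x) * l a + (x - a) * l d"
proof -
  define t where "t = (x - a) / (d - a)"
  have t0: "0 \<le> t" "t \<le> 1" using assms by (auto simp: t_def field_simps)
  have tt: "t * (d - a) = x - a" using assms by (simp add: t_def)
  have xe: "(1 - t) *\<^sub>R a + t *\<^sub>R d = x"
  proof -
    have "(1 - t) * a + t * d = a + t * (d - a)" by (simp add: algebra_simps)
    then show ?thesis using tt by simp
  qed
  have "l ((1 - t) *\<^sub>R a + t *\<^sub>R d) \<ge> (1 - t) * l a + t * l d"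
    by (rule concave_onD[OF conc t0]) (use assms in auto)
  hence "l x \<ge> (1 - t) * l a + t * l d" using xe by simp
  hence "(d - a) * l x \<ge> (d - a) * ((1 - t) * l a + t * l d)"
    using assms by (simp add: mult_left_mono)
  also have "(d - a) * ((1 - t) * l a + t * l d) = (d - x) * l a + (x - a) * l d"
  proof -
    have "(d - a) * ((1 - t) * l a + t * l d) = (d - a) * l a - (t * (d - a)) * l a + (t * (d - a)) * l d"
      by (simp add: algebra_simps)
    also have "\<dots> = (d - a) * l a - (x - a) * l a + (x - a) * l d" by (simp only: tt)
    also have "\<dots> = (d - x) * l a + (x - a) * l d" by (simp add: algebra_simps)
    finally show ?thesis .
  qed
  finally show ?thesis .
qed

lemma key:
  fixes l :: "real \<Rightarrow> real"
  assumes conc: "concave_on {0..1} l" and o: "0 \<le> a" "a \<le> b" "b \<le> c" "c \<le> d" "d \<le> 1"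
    and h: "0 < hi" "hi < 1" "0 < hj" "hj < 1"
    and m: "hi * d + (1 - hi) * a = hj * c + (1 - hj) * b"
  shows "hi * l d + (1 - hi) * l a \<le> hj * l c + (1 - hj) * l b"
proof (cases "a = d")
  case True
  then have "b = a" "c = a" using o by auto
  then show ?thesis using True by (simp add: algebra_simps)
next
  case False
  then have ad: "a < d" using o by auto
  have C: "(d - a) * l c \<ge> (d - c) * l a + (c - a) * l d"
    by (rule chord[OF conc]) (use o ad in auto)
  have B: "(d - a) * l b \<ge> (d - b) * l a + (b - a) * l d"
    by (rule chord[OF conc]) (use o ad in auto)
  have "(d - a) * (hj * l c + (1 - hj) * l b) = hj * ((d - a) * l c) + (1 - hj) * ((d - a) * l b)"
    by (simp add: algebra_simps)
  also have "\<dots> \<ge> hj * ((d - c) * l a + (c - a) * l d) + (1 - hj) * ((d - b) * l a + (b - a) * l d)"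
    using C B h by (intro add_mono mult_left_mono) auto
  also have "hj * ((d - c) * l a + (c - a) * l d) + (1 - hj) * ((d - b) * l a + (b - a) * l d)
     = (d - (hj * c + (1 - hj) * b)) * l a + ((hj * c + (1 - hj) * b) - a) * l d"
    by (simp add: algebra_simps)
  also have "\<dots> = (d - a) * (hi * l d + (1 - hi) * l a)"
    unfolding m[symmetric] by (simp add: algebra_simps)
  finally have "(d - a) * (hi * l d + (1 - hi) * l a) \<le> (d - a) * (hj * l c + (1 - hj) * l b)" .
  then show ?thesis using ad by simp
qed

lemma total:
  fixes P :: "'w pmf" and s :: "'w \<Rightarrow> 'c \<Rightarrow> bool"
  assumes "0 < alarm_prob P y k" "alarm_prob P y k < 1"
  shows "alarm_prob P y k * post_fail P s phi y k False
       + (1 - alarm_prob P y k) * post_fail P s phi y k True = prior_fail P s phi"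
proof -
  have c: "measure_pmf.prob P {w. y k w = True} = 1 - alarm_prob P y k"
  proof -
    have "{w. y k w = True} = UNIV - {w. \<not> y k w}" by auto
    then show ?thesis unfolding alarm_prob_def
      using measure_pmf.prob_compl[of "{w. \<not> y k w}" P] by simp
  qed
  have f: "{w. y k w = False} = {w. \<not> y k w}" by auto
  have u: "measure_pmf.prob P {w. \<not> phi (s w)} =
     measure_pmf.prob P {w. \<not> phi (s w) \<and> y k w = False} + measure_pmf.prob P {w. \<not> phi (s w) \<and> y k w = True}"
  proof -
    have "{w. \<not> phi (s w)} = {w. \<not> phi (s w) \<and> y k w = False} \<union> {w. \<not> phi (s w) \<and> y k w = True}" by auto
    then show ?thesis by (simp add: measure_pmf.finite_measure_Union disjoint_iff)
  qed
  show ?thesis using assms unfolding post_fail_def prior_fail_def c f u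
    by (simp add: alarm_prob_def)
qed

theorem mainTheorem1:
  fixes P :: "'w pmf"
    and s :: "'w \<Rightarrow> 'c::finite \<Rightarrow> bool"
    and phi :: "('c \<Rightarrow> bool) \<Rightarrow> bool"
    and y :: "'c \<Rightarrow> 'w \<Rightarrow> bool"
    and i j :: 'c
    and l :: "real \<Rightarrow> real"
  assumes hi: "0 < alarm_prob P y i" "alarm_prob P y i < 1"
    and hj: "0 < alarm_prob P y j" "alarm_prob P y j < 1"
    and nest: "0 \<le> post_fail P s phi y i True"
      "post_fail P s phi y i True \<le> post_fail P s phi y j True"
      "post_fail P s phi y j True \<le> post_fail P s phi y j False"
      "post_fail P s phi y j False \<le> post_fail P s phi y i False"
      "post_fail P s phi y i False \<le> 1"
    and conc: "concave_on {0..1} l"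
  shows "LG_post l P s phi y i \<le> LG_post l P s phi y j
         \<and> VoI_G l P s phi y i \<ge> VoI_G l P s phi y j"
proof -
  have m: "alarm_prob P y i * post_fail P s phi y i False + (1 - alarm_prob P y i) * post_fail P s phi y i True
      = alarm_prob P y j * post_fail P s phi y j False + (1 - alarm_prob P y j) * post_fail P s phi y j True"
    using total[OF hi, of s phi] total[OF hj, of s phi] by simp
  have "LG_post l P s phi y i \<le> LG_post l P s phi y j"
    unfolding LG_post_def by (rule key[OF conc nest hi hj m])
  then show ?thesis unfolding VoI_G_def by simp
qed

end
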